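(* Let $G\in\mathfrak{Y}_n$ be a finite soluble non-nilpotent group, let $F$ be its Fitting subgroup, and let $p=|G:F|$ (a prime). Then the Sylow $p$-subgroups of $G$ are cyclic, and for every prime $r\neq p$ the Sylow $r$-subgroups of $G$ are abelian.
   Context: $\mathfrak{Y}_n$ denotes the class of all groups $G$ such that $N_G(A)=A$ for every non-abelian subgroup $A\le G$. The Fitting subgroup is the subgroup generated by all nilpotent normal subgroups. *)

theory Defs
  imports "HOL-Algebra.Algebra" "HOL-Computational_Algebra.Primes"
begin

fun lower_central :: "('a, 'b) monoid_scheme \<Rightarrow> nat \<Rightarrow> 'a set" where
  "lower_central G 0 = carrier G"
| "lower_central G (Suc n) =
     generate G {x \<otimes>\<^bsub>G\<^esub> y \<otimes>\<^bsub>G\<^esub> inv\<^bsub>G\<^esub> x \<otimes>\<^bsub>G\<^esub> inv\<^bsub>G\<^esub> y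
                 | x y. x \<in> lower_central G n \<and> y \<in> carrier G}"

definition nilpotent_grp :: "('a, 'b) monoid_scheme \<Rightarrow> bool" where
  "nilpotent_grp G \<longleftrightarrow> (\<exists>n. lower_central G n = {\<one>\<^bsub>G\<^esub>})"

definition fitting_subgroup :: "('a, 'b) monoid_scheme \<Rightarrow> 'a set" where
  "fitting_subgroup G =
     generate G (\<Union>{N. N \<lhd> G \<and> nilpotent_grp (G\<lparr>carrier := N\<rparr>)})"

definition class_Yn :: "('a, 'b) monoid_scheme \<Rightarrow> bool" where
  "class_Yn G \<longleftrightarrow> (\<forall>A. subgroup A G \<longrightarrow> \<not> comm_group (G\<lparr>carrier := A\<rparr>)
                         \<longrightarrow> normalizer G A = A)"

definition sylow_subgroup :: "('a, 'b) monoid_scheme \<Rightarrow> nat \<Rightarrow> 'a set \<Rightarrow> bool" where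
  "sylow_subgroup G r P \<longleftrightarrow>
     subgroup P G \<and> card P = r ^ multiplicity r (order G)"

end

theory Submission
  imports Defs "HOL-Algebra.Multiplicative_Group"
begin


context group begin

lemma conj_set:
  assumes "H \<subseteq> carrier G" "g \<in> carrier G"
  shows "g <# H #> inv g = (\<lambda>h. g \<otimes> h \<otimes> inv g) ` H"
  unfolding l_coset_def r_coset_def by auto

lemma conj_set_card:
  assumes "H \<subseteq> carrier G" "g \<in> carrier G"
  shows "card (g <# H #> inv g) = card H"
proof -
  have "inj_on (\<lambda>h. g \<otimes> h \<otimes> inv g) H"
    using assms by (auto simp: inj_on_def subsetD)
  thus ?thesis by (simp add: conj_set[OF assms] card_image)
qed

lemma pow_coprime_one:
  assumes "x \<in> carrier G" "x [^] (a::nat) = \<one>" "x [^] (b::nat) = \<one>" "coprime a b"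
  shows "x = \<one>"
proof -
  have "ord x dvd a" "ord x dvd b" using assms pow_eq_id by auto
  hence "ord x dvd gcd a b" by simp
  hence "ord x = 1" using assms(4) by simp
  thus ?thesis using ord_eq_1 assms(1) by blast
qed

lemma subgroup_pow_order:
  assumes "subgroup P G" "finite P" "y \<in> P"
  shows "y [^] card P = \<one>"
proof -
  interpret P: group "G\<lparr>carrier := P\<rparr>" using subgroup_imp_group[OF assms(1)] .
  have e: "y [^] card P = y [^]\<^bsub>G\<lparr>carrier := P\<rparr>\<^esub> card P" by (rule nat_pow_consistent)
  have o: "order (G\<lparr>carrier := P\<rparr>) = card P" unfolding order_def by simp
  have u: "\<one>\<^bsub>G\<lparr>carrier := P\<rparr>\<^esub> = \<one>" by simp
  have "y [^]\<^bsub>G\<lparr>carrier := P\<rparr>\<^esub> order (G\<lparr>carrier := P\<rparr>) = \<one>\<^bsub>G\<lparr>carrier := P\<rparr>\<^esub>"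
    using P.pow_order_eq_1 assms by simp
  thus ?thesis unfolding e o u .
qed

lemma normalizer_elem:
  assumes "H \<subseteq> carrier G" "g \<in> normalizer G H" "h \<in> H"
  shows "g \<otimes> h \<otimes> inv g \<in> H"
proof -
  have g: "g \<in> carrier G" "g <# H #> inv g = H"
    using assms unfolding normalizer_def stabilizer_def by auto
  thus ?thesis using conj_set[OF assms(1) g(1)] assms(3) by auto
qed

lemma normalizerI:
  assumes "H \<subseteq> carrier G" "subgroup A G"
    and "\<And>g h. g \<in> A \<Longrightarrow> h \<in> H \<Longrightarrow> g \<otimes> h \<otimes> inv g \<in> H"
  shows "A \<subseteq> normalizer G H"
proof
  fix g assume g: "g \<in> A"
  have gc: "g \<in> carrier G" using subgroup.mem_carrier[OF assms(2) g] .
  have ig: "inv g \<in> A" using subgroup.m_inv_closed[OF assms(2) g] .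
  have "(\<lambda>h. g \<otimes> h \<otimes> inv g) ` H = H"
  proof
    show "(\<lambda>h. g \<otimes> h \<otimes> inv g) ` H \<subseteq> H"
    proof
      fix y assume "y \<in> (\<lambda>h. g \<otimes> h \<otimes> inv g) ` H"
      then obtain h where "h \<in> H" "y = g \<otimes> h \<otimes> inv g" by blast
      thus "y \<in> H" using assms(3)[OF g] by simp
    qed
    show "H \<subseteq> (\<lambda>h. g \<otimes> h \<otimes> inv g) ` H"
    proof
      fix h assume h: "h \<in> H"
      have hc: "h \<in> carrier G" using h assms(1) by blast
      have i1: "inv g \<otimes> h \<otimes> inv (inv g) \<in> H" using assms(3)[OF ig h] .
      have i2: "h = g \<otimes> (inv g \<otimes> h \<otimes> inv (inv g)) \<otimes> inv g"
        using gc hc by (metis inv_closed inv_inv m_assoc m_closed r_inv r_one l_one l_inv)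
      show "h \<in> (\<lambda>h. g \<otimes> h \<otimes> inv g) ` H" by (rule rev_image_eqI[where f="\<lambda>h. g \<otimes> h \<otimes> inv g", OF i1 i2])
    qed
  qed
  hence "g <# H #> inv g = H" using conj_set[OF assms(1) gc] by simp
  thus "g \<in> normalizer G H" unfolding normalizer_def stabilizer_def
    using gc assms(1) by simp
qed

end



lemma (in group_action) fixpoint_mod:
  assumes fin: "finite (carrier G)" and ord: "order G = p ^ b" and pr: "Factorial_Ring.prime p"
    and "finite S" "S \<subseteq> E" "\<And>x. x \<in> S \<Longrightarrow> orbit G \<phi> x \<subseteq> S"
  shows "card S mod p = card {x\<in>S. orbit G \<phi> x = {x}} mod p"
  using assms(4-6)
proof (induction S rule: finite_psubset_induct)
  case (psubset S)
  show ?case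
  proof (cases "S = {}")
    case True thus ?thesis by simp
  next
    case False
    then obtain x where x: "x \<in> S" by blast
    define Ob where "Ob = orbit G \<phi> x"
    have xE: "x \<in> E" using x psubset.prems(1) by blast
    have xO: "x \<in> Ob" unfolding Ob_def using orbit_refl[OF xE] .
    have OS: "Ob \<subseteq> S" unfolding Ob_def using psubset.prems(2)[OF x] .
    have OE: "Ob \<subseteq> E" using OS psubset.prems(1) by blast
    define S' where "S' = S - Ob"
    have sub: "S' \<subset> S" unfolding S'_def using xO x by blast
    have inv: "orbit G \<phi> y \<subseteq> S'" if y: "y \<in> S'" for y
    proof
      fix z assume z: "z \<in> orbit G \<phi> y"
      have yS: "y \<in> S" using y S'_def by blast
      have yE: "y \<in> E" using yS psubset.prems(1) by blast
      have zS: "z \<in> S" using psubset.prems(2)[OF yS] z by blast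
      have zE: "z \<in> E" using zS psubset.prems(1) by blast
      show "z \<in> S'"
      proof (rule ccontr)
        assume "z \<notin> S'"
        hence zO: "z \<in> Ob" using zS S'_def by blast
        have "y \<in> orbit G \<phi> z" using orbit_sym[OF yE zE z] .
        hence "y \<in> Ob" using orbit_trans[OF xE zE yE] zO Ob_def by blast
        thus False using y S'_def by blast
      qed
    qed
    have IH: "card S' mod p = card {x\<in>S'. orbit G \<phi> x = {x}} mod p"
      using psubset.IH[OF sub] sub psubset.prems(1) inv by blast
    have finS: "finite S" using psubset.hyps .
    have finO: "finite Ob" using OS finS finite_subset by blast
    have cardS: "card S = card S' + card Ob"
      unfolding S'_def using OS finS finO card_Diff_subset[OF finO OS] card_mono[OF finS OS] by simp
    define Fx where "Fx = {x\<in>S. orbit G \<phi> x = {x}}"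
    define Fx' where "Fx' = {x\<in>S'. orbit G \<phi> x = {x}}"
    have stab: "card Ob * card (stabilizer G \<phi> x) = p ^ b"
      using orbit_stabilizer_theorem[OF xE] ord Ob_def by simp
    hence "card Ob dvd p ^ b" by (metis dvd_triv_left)
    then obtain j where j: "card Ob = p ^ j" using divides_primepow_nat[OF pr] by blast
    show ?thesis
    proof (cases "j = 0")
      case True
      hence c1: "card Ob = 1" using j by simp
      hence Ox: "Ob = {x}" using xO by (metis card_1_singletonE singletonD)
      have "Fx = insert x Fx'" unfolding Fx_def Fx'_def S'_def using Ox x Ob_def by auto
      moreover have "x \<notin> Fx'" unfolding Fx'_def S'_def using xO by blast
      moreover have "finite Fx'" unfolding Fx'_def using sub finS finite_subset
        by (metis (no_types, lifting) mem_Collect_eq psubsetE subsetI)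
      ultimately have "card Fx = Suc (card Fx')" by simp
      hence "card Fx mod p = Suc (card Fx') mod p" by simp
      also have "\<dots> = Suc (card S') mod p" using IH Fx'_def by (metis mod_Suc_eq)
      also have "\<dots> = card S mod p" using cardS c1 by simp
      finally show ?thesis using Fx_def by simp
    next
      case False
      hence pd: "p dvd card Ob" using j by simp
      have "Fx = Fx'"
      proof -
        have "y \<notin> Ob" if "y \<in> S" "orbit G \<phi> y = {y}" for y
        proof
          assume yO: "y \<in> Ob"
          have yE: "y \<in> E" using that(1) psubset.prems(1) by blast
          have "x \<in> orbit G \<phi> y" using orbit_sym[OF xE yE] yO Ob_def by blast
          hence "x = y" using that(2) by blast
          hence "card Ob = 1" using that(2) Ob_def by simp
          thus False using pd pr by (metis nat_dvd_1_iff_1 not_prime_1)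
        qed
        thus ?thesis unfolding Fx_def Fx'_def S'_def by blast
      qed
      moreover have "card S mod p = card S' mod p" using cardS pd by (auto elim!: dvdE)
      ultimately show ?thesis using IH Fx_def Fx'_def by simp
    qed
  qed
qed




context group begin

lemma cancel_l1 [simp]: "g \<in> carrier G \<Longrightarrow> x \<in> carrier G \<Longrightarrow> inv g \<otimes> (g \<otimes> x) = x"
  by (simp add: m_assoc[symmetric])

lemma cancel_l2 [simp]: "g \<in> carrier G \<Longrightarrow> x \<in> carrier G \<Longrightarrow> g \<otimes> (inv g \<otimes> x) = x"
  by (simp add: m_assoc[symmetric])

lemma conj_comp:
  assumes "g \<in> carrier G" "h \<in> carrier G" "m \<in> carrier G"
  shows "(inv g \<otimes> h \<otimes> g) \<otimes> m \<otimes> inv (inv g \<otimes> h \<otimes> g)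
       = inv g \<otimes> (h \<otimes> (g \<otimes> m \<otimes> inv g) \<otimes> inv h) \<otimes> inv (inv g)"
  using assms by (simp add: inv_mult_group m_assoc)

lemma normalizer_grows:
  assumes fin: "finite (carrier G)" and ord: "order G = p ^ a" and pr: "Factorial_Ring.prime p"
    and M: "subgroup M G" "M \<noteq> carrier G"
  shows "\<exists>g\<in>carrier G - M. g <# M #> inv g = M"
proof (rule ccontr)
  assume "\<not> ?thesis"
  hence A: "\<And>g. g \<in> carrier G \<Longrightarrow> g <# M #> inv g = M \<Longrightarrow> g \<in> M" by blast
  define U where "U = {H. H \<subseteq> carrier G}"
  define \<phi> where "\<phi> = (\<lambda>g. \<lambda>H \<in> {H. H \<subseteq> carrier G}. g <# H #> (inv g))"
  interpret GA: group_action G U \<phi>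
    unfolding U_def \<phi>_def by (rule action_by_conjugation_on_power_set)
  have Mc: "M \<subseteq> carrier G" using subgroup.subset[OF M(1)] .
  have MU: "M \<in> U" using Mc U_def by simp
  have phiM: "\<phi> g M = g <# M #> inv g" for g unfolding \<phi>_def using Mc by simp
  have selfconj: "m <# M #> inv m = M" if m: "m \<in> M" for m
  proof -
    have mc: "m \<in> carrier G" using Mc m by blast
    have "m <# M = M" using coset_join3[OF mc M(1) m] .
    moreover have "M #> inv m = M"
      using coset_join2[OF inv_closed[OF mc] M(1) subgroup.m_inv_closed[OF M(1) m]] .
    ultimately show ?thesis by simp
  qed
  have stabM: "stabilizer G \<phi> M = M"
    unfolding stabilizer_def phiM using A selfconj Mc by blast
  have os: "card (orbit G \<phi> M) * card M = p ^ a"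
    using GA.orbit_stabilizer_theorem[OF MU] stabM ord by simp
  have finM: "finite M" using fin Mc finite_subset by blast
  have "card M dvd p ^ a" using os by (metis dvd_triv_right)
  then obtain b where b: "b \<le> a" "card M = p ^ b" using divides_primepow_nat[OF pr] by blast
  have "b \<noteq> a"
  proof
    assume "b = a"
    hence "card M = card (carrier G)" using b ord order_def by metis
    hence "M = carrier G" using card_subset_eq[OF fin Mc] by simp
    thus False using M(2) by simp
  qed
  hence ba: "b < a" using b by simp
  have p0: "p > 0" using pr prime_gt_0_nat by blast
  have "card (orbit G \<phi> M) * p ^ b = p ^ (a - b) * p ^ b"
    using os b ba by (simp add: power_add[symmetric])
  hence co: "card (orbit G \<phi> M) = p ^ (a - b)" using p0 by simp
  have pdS: "p dvd card (orbit G \<phi> M)" using co ba by simp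
  interpret GM: group_action "G\<lparr>carrier := M\<rparr>" U \<phi> using GA.induced_action[OF M(1)] .
  define S where "S = orbit G \<phi> M"
  have finU: "finite U" unfolding U_def using fin by simp
  have SU: "S \<subseteq> U" unfolding S_def orbit_def using GA.element_image MU by blast
  have finS: "finite S" using finite_subset[OF SU finU] .
  have orbM: "orbit (G\<lparr>carrier := M\<rparr>) \<phi> y = {\<phi> h y | h. h \<in> M}" for y
    unfolding orbit_def by simp
  have invS: "orbit (G\<lparr>carrier := M\<rparr>) \<phi> y \<subseteq> S" if y: "y \<in> S" for y
  proof
    fix z assume "z \<in> orbit (G\<lparr>carrier := M\<rparr>) \<phi> y"
    then obtain h where h: "h \<in> M" "z = \<phi> h y" using orbM by blast
    have yU: "y \<in> U" using y SU by blast
    have hc: "h \<in> carrier G" using h Mc by blast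
    have zU: "z \<in> U" using GA.element_image[OF hc yU] h by simp
    have "z \<in> orbit G \<phi> y" unfolding orbit_def using hc h by blast
    thus "z \<in> S" using GA.orbit_trans[OF MU yU zU] y S_def by blast
  qed
  have ordM: "order (G\<lparr>carrier := M\<rparr>) = p ^ b" using b by (simp add: order_def)
  have finMc: "finite (carrier (G\<lparr>carrier := M\<rparr>))" using finM by simp
  have fp: "card S mod p = card {x\<in>S. orbit (G\<lparr>carrier := M\<rparr>) \<phi> x = {x}} mod p"
    using GM.fixpoint_mod[OF finMc ordM pr finS SU invS] .
  have Fix: "{x\<in>S. orbit (G\<lparr>carrier := M\<rparr>) \<phi> x = {x}} = {M}"
  proof
    show "{M} \<subseteq> {x\<in>S. orbit (G\<lparr>carrier := M\<rparr>) \<phi> x = {x}}"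
    proof -
      have "M \<in> S" unfolding S_def using GA.orbit_refl[OF MU] .
      moreover have "orbit (G\<lparr>carrier := M\<rparr>) \<phi> M = {M}"
        unfolding orbM phiM using selfconj subgroup.one_closed[OF M(1)] by blast
      ultimately show ?thesis by blast
    qed
  next
    show "{x\<in>S. orbit (G\<lparr>carrier := M\<rparr>) \<phi> x = {x}} \<subseteq> {M}"
    proof
      fix y assume "y \<in> {x\<in>S. orbit (G\<lparr>carrier := M\<rparr>) \<phi> x = {x}}"
      hence yS: "y \<in> S" and yfix: "orbit (G\<lparr>carrier := M\<rparr>) \<phi> y = {y}" by auto
      have "y \<in> {(\<phi> g) M | g. g \<in> carrier G}" using yS unfolding S_def orbit_def .
      then obtain g where g: "g \<in> carrier G" "y = \<phi> g M" by blast
      have yimg: "y = (\<lambda>m. g \<otimes> m \<otimes> inv g) ` M" using g phiM conj_set[OF Mc g(1)] by simp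
      have yc: "y \<subseteq> carrier G" using yimg Mc g(1) by auto
      have hfix: "h <# y #> inv h = y" if h: "h \<in> M" for h
      proof -
        have "\<phi> h y \<in> orbit (G\<lparr>carrier := M\<rparr>) \<phi> y" using orbM h by blast
        hence "\<phi> h y = y" using yfix by blast
        thus ?thesis unfolding \<phi>_def using yc by simp
      qed
      have key: "inv g \<otimes> h \<otimes> g \<in> M" if h: "h \<in> M" for h
      proof -
        have hc: "h \<in> carrier G" using h Mc by blast
        define k where "k = inv g \<otimes> h \<otimes> g"
        have kc: "k \<in> carrier G" using k_def hc g(1) by simp
        have "(\<lambda>m. k \<otimes> m \<otimes> inv k) ` M
            = (\<lambda>u. inv g \<otimes> u \<otimes> inv (inv g)) ` ((\<lambda>v. h \<otimes> v \<otimes> inv h) ` ((\<lambda>m. g \<otimes> m \<otimes> inv g) ` M))"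
          unfolding image_image k_def
          using conj_comp[OF g(1) hc] Mc by (intro image_cong) auto
        also have "(\<lambda>v. h \<otimes> v \<otimes> inv h) ` ((\<lambda>m. g \<otimes> m \<otimes> inv g) ` M) = y"
          using hfix[OF h] conj_set[OF yc hc] yimg by simp
        also have "(\<lambda>u. inv g \<otimes> u \<otimes> inv (inv g)) ` y = M"
        proof -
          have "(\<lambda>u. inv g \<otimes> u \<otimes> inv (inv g)) ` y
              = (\<lambda>m. inv g \<otimes> (g \<otimes> m \<otimes> inv g) \<otimes> inv (inv g)) ` M"
            unfolding yimg image_image ..
          also have "\<dots> = (\<lambda>m. m) ` M"
            using Mc g(1) by (intro image_cong) (auto simp: m_assoc subsetD)
          finally show ?thesis by simp
        qed
        finally have "k <# M #> inv k = M" using conj_set[OF Mc kc] by simp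
        thus ?thesis using A[OF kc] k_def by simp
      qed
      have "M \<subseteq> y"
      proof
        fix m assume m: "m \<in> M"
        have mc: "m \<in> carrier G" using m Mc by blast
        have "inv g \<otimes> m \<otimes> g \<in> M" using key[OF m] .
        moreover have "m = g \<otimes> (inv g \<otimes> m \<otimes> g) \<otimes> inv g"
          using mc g(1) by (simp add: m_assoc)
        ultimately show "m \<in> y" unfolding yimg
          by (rule rev_image_eqI[where f="\<lambda>m. g \<otimes> m \<otimes> inv g"])
      qed
      moreover have "card y = card M" using conj_set_card[OF Mc g(1)] g phiM by simp
      moreover have "finite y" using yimg finM by simp
      ultimately have "y = M" using card_subset_eq by metis
      thus "y \<in> {M}" by simp
    qed
  qed
  have p1: "p > 1" using pr prime_gt_1_nat by blast
  have "card S mod p = 1"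
    using fp Fix p1 by simp
  moreover have "card S mod p = 0" using pdS S_def by simp
  ultimately show False by simp
qed

end



context group begin

lemma subgroup_pow_closed:
  assumes "subgroup H G" "x \<in> H" shows "x [^] (n::nat) \<in> H"
proof (induction n)
  case 0 thus ?case using subgroup.one_closed[OF assms(1)] by simp
next
  case (Suc n) thus ?case using subgroup.m_closed[OF assms(1) Suc assms(2)] by simp
qed

lemma self_normalizer:
  assumes "subgroup M G" "m \<in> M" shows "m \<in> normalizer G M"
proof -
  have Mc: "M \<subseteq> carrier G" using subgroup.subset[OF assms(1)] .
  have mc: "m \<in> carrier G" using Mc assms(2) by blast
  have "m <# M = M" using coset_join3[OF mc assms(1) assms(2)] .
  moreover have "M #> inv m = M"
    using coset_join2[OF inv_closed[OF mc] assms(1) subgroup.m_inv_closed[OF assms(1) assms(2)]] .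
  ultimately show ?thesis unfolding normalizer_def stabilizer_def using mc Mc by simp
qed

lemma normalizer_mem:
  assumes "M \<subseteq> carrier G" "g \<in> carrier G" "g <# M #> inv g = M"
  shows "g \<in> normalizer G M"
  unfolding normalizer_def stabilizer_def using assms by simp

lemma fit_normal: "fitting_subgroup G \<lhd> G"
  unfolding fitting_subgroup_def
proof (rule normal_generateI)
  show "\<Union>{N. N \<lhd> G \<and> nilpotent_grp (G\<lparr>carrier := N\<rparr>)} \<subseteq> carrier G"
  proof
    fix h assume "h \<in> \<Union>{N. N \<lhd> G \<and> nilpotent_grp (G\<lparr>carrier := N\<rparr>)}"
    then obtain N where N: "N \<lhd> G" "h \<in> N" by blast
    have "subgroup N G" using normal_imp_subgroup[OF N(1)] .
    thus "h \<in> carrier G" using subgroup.mem_carrier N(2) by metis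
  qed
next
  fix h g assume h: "h \<in> \<Union>{N. N \<lhd> G \<and> nilpotent_grp (G\<lparr>carrier := N\<rparr>)}" and g: "g \<in> carrier G"
  then obtain N where N: "N \<lhd> G" "nilpotent_grp (G\<lparr>carrier := N\<rparr>)" "h \<in> N" by blast
  have nn: "\<forall>x\<in>carrier G. \<forall>h\<in>N. x \<otimes> h \<otimes> inv x \<in> N" using N(1) by (simp add: normal_inv_iff)
  have "g \<otimes> h \<otimes> inv g \<in> N" using nn N(3) g by simp
  moreover have "N \<in> {N. N \<lhd> G \<and> nilpotent_grp (G\<lparr>carrier := N\<rparr>)}" using N(1,2) by simp
  ultimately show "g \<otimes> h \<otimes> inv g \<in> \<Union>{N. N \<lhd> G \<and> nilpotent_grp (G\<lparr>carrier := N\<rparr>)}" by (rule UnionI[rotated])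
qed

lemma abelian_nilpotent:
  assumes "comm_group H" shows "nilpotent_grp H"
proof -
  interpret H: comm_group H by (rule assms)
  have "{x \<otimes>\<^bsub>H\<^esub> y \<otimes>\<^bsub>H\<^esub> inv\<^bsub>H\<^esub> x \<otimes>\<^bsub>H\<^esub> inv\<^bsub>H\<^esub> y | x y. x \<in> lower_central H 0 \<and> y \<in> carrier H}
        = {\<one>\<^bsub>H\<^esub>}"
  proof -
    have "x \<otimes>\<^bsub>H\<^esub> y \<otimes>\<^bsub>H\<^esub> inv\<^bsub>H\<^esub> x \<otimes>\<^bsub>H\<^esub> inv\<^bsub>H\<^esub> y = \<one>\<^bsub>H\<^esub>"
      if "x \<in> carrier H" "y \<in> carrier H" for x y
    proof -
      have "x \<otimes>\<^bsub>H\<^esub> y \<otimes>\<^bsub>H\<^esub> inv\<^bsub>H\<^esub> x = x \<otimes>\<^bsub>H\<^esub> (y \<otimes>\<^bsub>H\<^esub> inv\<^bsub>H\<^esub> x)"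
        using that by (simp add: H.m_assoc)
      also have "\<dots> = x \<otimes>\<^bsub>H\<^esub> (inv\<^bsub>H\<^esub> x \<otimes>\<^bsub>H\<^esub> y)"
        using that H.m_comm[of y "inv\<^bsub>H\<^esub> x"] by simp
      also have "\<dots> = y" using that by (simp add: H.m_assoc[symmetric])
      finally show ?thesis using that by simp
    qed
    hence "\<And>z. z \<in> {x \<otimes>\<^bsub>H\<^esub> y \<otimes>\<^bsub>H\<^esub> inv\<^bsub>H\<^esub> x \<otimes>\<^bsub>H\<^esub> inv\<^bsub>H\<^esub> y | x y. x \<in> lower_central H 0 \<and> y \<in> carrier H} \<Longrightarrow> z = \<one>\<^bsub>H\<^esub>"
      by auto
    moreover have "\<one>\<^bsub>H\<^esub> \<in> {x \<otimes>\<^bsub>H\<^esub> y \<otimes>\<^bsub>H\<^esub> inv\<^bsub>H\<^esub> x \<otimes>\<^bsub>H\<^esub> inv\<^bsub>H\<^esub> y | x y. x \<in> lower_central H 0 \<and> y \<in> carrier H}"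
    proof -
      have "\<one>\<^bsub>H\<^esub> \<otimes>\<^bsub>H\<^esub> \<one>\<^bsub>H\<^esub> \<otimes>\<^bsub>H\<^esub> inv\<^bsub>H\<^esub> \<one>\<^bsub>H\<^esub> \<otimes>\<^bsub>H\<^esub> inv\<^bsub>H\<^esub> \<one>\<^bsub>H\<^esub> = \<one>\<^bsub>H\<^esub>" by simp
      moreover have "\<one>\<^bsub>H\<^esub> \<in> lower_central H 0" by simp
      ultimately show ?thesis by (metis (mono_tags, lifting) H.one_closed mem_Collect_eq)
    qed
    ultimately show ?thesis by blast
  qed
  hence "lower_central H (Suc 0) = {\<one>\<^bsub>H\<^esub>}" using H.generate_one by simp
  thus ?thesis unfolding nilpotent_grp_def by blast
qed

lemma abelian_normal_in_fit:
  assumes "N \<lhd> G" "comm_group (G\<lparr>carrier := N\<rparr>)"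
  shows "N \<subseteq> fitting_subgroup G"
proof -
  have "N \<in> {N. N \<lhd> G \<and> nilpotent_grp (G\<lparr>carrier := N\<rparr>)}"
    using assms(1) abelian_nilpotent[OF assms(2)] by simp
  hence "N \<subseteq> \<Union>{N. N \<lhd> G \<and> nilpotent_grp (G\<lparr>carrier := N\<rparr>)}" by (rule Union_upper)
  thus ?thesis unfolding fitting_subgroup_def using generate.incl[of _ _ G] by (meson subsetI subsetD)
qed

lemma rcos_pow:
  assumes "F \<lhd> G" "g \<in> carrier G"
  shows "(F #> g) [^]\<^bsub>G Mod F\<^esub> (n::nat) = F #> (g [^] n)"
proof (induction n)
  case 0
  have "F #> \<one> = F" using coset_mult_one[OF subgroup.subset[OF normal_imp_subgroup[OF assms(1)]]] .
  thus ?case by (simp add: FactGroup_def)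
next
  case (Suc n)
  interpret N: normal F G by (rule assms(1))
  have "(F #> g) [^]\<^bsub>G Mod F\<^esub> Suc n = (F #> (g [^] n)) <#> (F #> g)"
    using Suc by (simp add: FactGroup_def)
  also have "\<dots> = F #> (g [^] n \<otimes> g)" using N.rcos_sum assms(2) by simp
  finally show ?case by simp
qed

lemma pow_index_in:
  assumes fin: "finite (carrier G)" and N: "F \<lhd> G" and c: "card (rcosets F) = p" and g: "g \<in> carrier G" and p0: "p > 0"
  shows "g [^] p \<in> F"
proof -
  interpret N: normal F G by (rule N)
  interpret Q: group "G Mod F" by (rule N.factorgroup_is_group)
  have ordQ: "order (G Mod F) = p" using c by (simp add: order_def FactGroup_def)
  have finQ: "finite (carrier (G Mod F))" 
  proof -
    have "card (rcosets F) > 0" using c p0 by simp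
    hence "finite (rcosets F)" by (rule card_ge_0_finite)
    thus ?thesis by (simp add: FactGroup_def)
  qed
  have "F #> g \<in> carrier (G Mod F)" using g by (simp add: FactGroup_def rcosetsI N.subset)
  hence "(F #> g) [^]\<^bsub>G Mod F\<^esub> order (G Mod F) = \<one>\<^bsub>G Mod F\<^esub>" by (rule Q.pow_order_eq_1)
  hence "F #> (g [^] p) = F" using rcos_pow[OF N g] ordQ by (simp add: FactGroup_def)
  thus ?thesis using coset_join1[OF _ nat_pow_closed[OF g] N.subgroup_axioms] by simp
qed

end



lemma prime_only_factor:
  fixes n p :: nat
  assumes "n > 0" "Factorial_Ring.prime p" "\<And>r. Factorial_Ring.prime r \<Longrightarrow> r dvd n \<Longrightarrow> r = p"
  shows "n = p ^ multiplicity p n"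
proof -
  have h1: "n \<noteq> 0" using assms(1) by simp
  have h2: "\<not> is_unit p" using assms(2) by (metis not_prime_unit)
  obtain m where m: "n = p ^ multiplicity p n * m" "\<not> p dvd m"
    by (rule multiplicity_decompose'[OF h1 h2])
  have "m = 1"
  proof (rule ccontr)
    assume "m \<noteq> 1"
    then obtain r where r: "Factorial_Ring.prime r" "r dvd m" using prime_factor_nat by blast
    have "r dvd p ^ multiplicity p n * m" using r(2) by (rule dvd_mult)
    hence "r dvd n" using m(1) by simp
    hence "r = p" using assms(3) r(1) by blast
    thus False using r(2) m(2) by simp
  qed
  thus ?thesis using m by simp
qed

context group begin

lemma conj_pow:
  assumes "g \<in> carrier G" "f \<in> carrier G"
  shows "(g \<otimes> f \<otimes> inv g) [^] (n::nat) = g \<otimes> f [^] n \<otimes> inv g"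
proof (induction n)
  case 0 thus ?case using assms by simp
next
  case (Suc n)
  have "(g \<otimes> f \<otimes> inv g) [^] Suc n = (g \<otimes> f [^] n \<otimes> inv g) \<otimes> (g \<otimes> f \<otimes> inv g)"
    using Suc by simp
  also have "\<dots> = g \<otimes> (f [^] n \<otimes> f) \<otimes> inv g"
    using assms by (simp add: m_assoc)
  finally show ?case by simp
qed

lemma torsion_normal:
  assumes N: "F \<lhd> G" and C: "comm_group (G\<lparr>carrier := F\<rparr>)"
  shows "{f \<in> F. f [^] (e::nat) = \<one>} \<lhd> G"
proof -
  interpret N: normal F G by (rule N)
  have Fc: "F \<subseteq> carrier G" by (rule N.subset)
  interpret CF: comm_group "G\<lparr>carrier := F\<rparr>" by (rule C)
  have comm: "x \<otimes> y = y \<otimes> x" if "x \<in> F" "y \<in> F" for x y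
    using CF.m_comm[of x y] that by simp
  show ?thesis
  proof (subst normal_inv_iff, intro conjI ballI)
    show "subgroup {f \<in> F. f [^] e = \<one>} G"
    proof (rule subgroupI)
      show "{f \<in> F. f [^] e = \<one>} \<subseteq> carrier G" using Fc by blast
      show "{f \<in> F. f [^] e = \<one>} \<noteq> {}" using N.one_closed by (metis (mono_tags, lifting) empty_iff mem_Collect_eq nat_pow_one)
    next
      fix a assume a: "a \<in> {f \<in> F. f [^] e = \<one>}"
      hence ac: "a \<in> carrier G" using Fc by blast
      show "inv a \<in> {f \<in> F. f [^] e = \<one>}" using a ac nat_pow_inv[OF ac, of e] N.m_inv_closed by simp
    next
      fix a b assume a: "a \<in> {f \<in> F. f [^] e = \<one>}" and b: "b \<in> {f \<in> F. f [^] e = \<one>}"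
      have ac: "a \<in> carrier G" "b \<in> carrier G" using a b Fc by auto
      have "(a \<otimes> b) [^] e = a [^] e \<otimes> b [^] e" using pow_mult_distrib[OF comm ac] a b by simp
      thus "a \<otimes> b \<in> {f \<in> F. f [^] e = \<one>}" using a b N.m_closed by simp
    qed
  next
    fix g h assume g: "g \<in> carrier G" and h: "h \<in> {f \<in> F. f [^] e = \<one>}"
    have hc: "h \<in> carrier G" using h Fc by blast
    have nn: "\<forall>x\<in>carrier G. \<forall>h\<in>F. x \<otimes> h \<otimes> inv x \<in> F" using N by (simp add: normal_inv_iff)
    have "g \<otimes> h \<otimes> inv g \<in> F" using nn h g by simp
    moreover have "(g \<otimes> h \<otimes> inv g) [^] e = \<one>" using conj_pow[OF g hc] h g by simp
    ultimately show "g \<otimes> h \<otimes> inv g \<in> {f \<in> F. f [^] e = \<one>}" by simp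
  qed
qed

lemma index_prime_full:
  assumes fin: "finite (carrier G)" and N: "subgroup N G" and F: "subgroup F G"
    and FN: "F \<subseteq> N" and x: "x \<in> N" "x \<notin> F"
    and c: "card (rcosets F) = p" and pr: "Factorial_Ring.prime p"
  shows "N = carrier G"
proof -
  have l1: "card (rcosets N) * card N = order G" using lagrange[OF N] .
  interpret NG: group "G\<lparr>carrier := N\<rparr>" using subgroup_imp_group[OF N] .
  have FsN: "subgroup F (G\<lparr>carrier := N\<rparr>)" using subgroup_incl[OF F N FN] .
  have l2: "card (rcosets\<^bsub>G\<lparr>carrier := N\<rparr>\<^esub> F) * card F = card N"
    using NG.lagrange[OF FsN] by (simp add: order_def)
  have l3: "p * card F = order G" using lagrange[OF F] c by simp
  have finN: "finite N" using finite_subset[OF subgroup.subset[OF N] fin] .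
  have "card F < card N" using psubset_card_mono[OF finN] FN x by blast
  hence j: "card (rcosets\<^bsub>G\<lparr>carrier := N\<rparr>\<^esub> F) \<noteq> 1" using l2 by auto
  have finF: "finite F" using finite_subset[OF FN finN] .
  have "F \<noteq> {}" using subgroup.one_closed[OF F] by blast
  hence cF: "card F > 0" using finF by (simp add: card_gt_0_iff)
  define j where "j = card (rcosets\<^bsub>G\<lparr>carrier := N\<rparr>\<^esub> F)"
  define i where "i = card (rcosets N)"
  have "p * card F = (i * j) * card F" using l1 l2 l3 unfolding i_def j_def by (simp add: mult.assoc)
  hence pij: "p = i * j" using cF by simp
  have jd: "j dvd p" using pij by simp
  have "j = 1 \<or> j = p" using pr jd unfolding prime_nat_iff by blast
  hence jp: "j = p" using j j_def by simp
  have "i * p = p" using pij jp by metis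
  hence "i = 1" using prime_gt_0_nat[OF pr] by simp
  hence "card (rcosets N) = 1" using i_def by simp
  hence "card N = order G" using l1 by simp
  thus ?thesis using card_subset_eq[OF fin subgroup.subset[OF N]] by (simp add: order_def)
qed

lemma r_case:
  assumes fin: "finite (carrier G)" and FN: "F \<subseteq> carrier G" and C: "comm_group (G\<lparr>carrier := F\<rparr>)"
    and Fs: "subgroup F G"
    and pw: "\<And>g. g \<in> carrier G \<Longrightarrow> g [^] p \<in> F"
    and pr: "Factorial_Ring.prime p" and rr: "Factorial_Ring.prime r" "r \<noteq> p"
    and P: "sylow_subgroup G r P"
  shows "comm_group (G\<lparr>carrier := P\<rparr>)"
proof -
  have Pd: "subgroup P G \<and> card P = r ^ multiplicity r (order G)"
    using P unfolding sylow_subgroup_def .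
  have Ps: "subgroup P G" using Pd by (rule conjunct1)
  have cP: "card P = r ^ multiplicity r (order G)" using Pd by (rule conjunct2)
  have Pc: "P \<subseteq> carrier G" using subgroup.subset[OF Ps] .
  have finP: "finite P" using finite_subset[OF Pc fin] .
  have pr': "coprime p r" using primes_coprime[OF pr rr(1)] rr(2) by metis
  have cop: "coprime p (card P)" unfolding cP using pr' by (rule coprime_power_right_iff[THEN iffD2, OF disjI1])
  have p0: "p \<noteq> 0" using prime_gt_0_nat[OF pr] by simp
  obtain s t where st: "p * s = card P * t + gcd p (card P)"
    using bezout_nat[OF p0, of "card P"] by blast
  have g1: "gcd p (card P) = 1" using cop by (metis coprime_iff_gcd_eq_1)
  have st1: "p * s = card P * t + 1" using st unfolding g1 .
  have PF: "P \<subseteq> F"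
  proof
    fix y assume y: "y \<in> P"
    have yc: "y \<in> carrier G" using y Pc by blast
    have y1: "y [^] card P = \<one>" using subgroup_pow_order[OF Ps finP y] .
    have yt: "y [^] (card P * t) = \<one>"
    proof -
      have "(y [^] card P) [^] t = y [^] (card P * t)" using nat_pow_pow[OF yc] .
      thus ?thesis using y1 by simp
    qed
    have "(y [^] p) [^] s = y [^] (p * s)" using nat_pow_pow[OF yc] .
    also have "\<dots> = y [^] (card P * t + 1)" using st1 by simp
    also have "\<dots> = y [^] (card P * t) \<otimes> y" using nat_pow_Suc[of y "card P * t"] by simp
    also have "\<dots> = y" using yt yc by simp
    finally have "(y [^] p) [^] s = y" .
    hence "y = (y [^] p) [^] s" by simp
    moreover have "(y [^] p) [^] s \<in> F" using subgroup_pow_closed[OF Fs pw[OF yc]] .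
    ultimately show "y \<in> F" by simp
  qed
  show ?thesis
  proof (rule group.group_comm_groupI[OF subgroup_imp_group[OF Ps]])
    fix x y assume "x \<in> carrier (G\<lparr>carrier := P\<rparr>)" "y \<in> carrier (G\<lparr>carrier := P\<rparr>)"
    hence "x \<in> F" "y \<in> F" using PF by auto
    thus "x \<otimes>\<^bsub>G\<lparr>carrier := P\<rparr>\<^esub> y = y \<otimes>\<^bsub>G\<lparr>carrier := P\<rparr>\<^esub> x"
      using comm_monoid.m_comm[OF comm_group.axioms(1)[OF C], of x y] by simp
  qed
qed

end



context group begin

lemma p_elems_card:
  assumes fin: "finite (carrier G)" and S: "subgroup S G" and pr: "Factorial_Ring.prime p"
    and ex: "\<And>s. s \<in> S \<Longrightarrow> s [^] (p ^ c) = \<one>"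
  shows "card S = p ^ multiplicity p (card S)"
proof (rule prime_only_factor[OF _ pr])
  have Sc: "S \<subseteq> carrier G" using subgroup.subset[OF S] .
  have finS: "finite S" using finite_subset[OF Sc fin] .
  have "S \<noteq> {}" using subgroup.one_closed[OF S] by blast
  thus "card S > 0" using finS by (simp add: card_gt_0_iff)
  fix r assume rr: "Factorial_Ring.prime r" and rd: "r dvd card S"
  show "r = p"
  proof (rule ccontr)
    assume rp: "r \<noteq> p"
    interpret SG: group "G\<lparr>carrier := S\<rparr>" using subgroup_imp_group[OF S] .
    define k where "k = multiplicity r (card S)"
    have cS0: "card S \<noteq> 0" using \<open>card S > 0\<close> by simp
    have ord: "order (G\<lparr>carrier := S\<rparr>) = r ^ k * (card S div r ^ k)"
      unfolding k_def order_def using multiplicity_dvd[of r "card S"] by simp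
    have finSG: "finite (carrier (G\<lparr>carrier := S\<rparr>))" using finS by simp
    obtain R where R: "subgroup R (G\<lparr>carrier := S\<rparr>)" "card R = r ^ k"
      using sylow_thm[OF rr SG.is_group ord finSG] by blast
    have nu: "\<not> is_unit r" using rr by (metis not_prime_unit)
    have "multiplicity r (card S) > 0" using multiplicity_gt_zero_iff[OF cS0 nu] rd by simp
    hence k1: "k \<ge> 1" unfolding k_def by simp
    have r1: "r > 1" using rr prime_gt_1_nat by blast
    have "r ^ 1 \<le> r ^ k" using power_increasing[OF k1, of r] r1 by linarith
    hence "r ^ k \<ge> r" by simp
    hence cR: "card R > 1" using R(2) r1 by simp
    have RS: "R \<subseteq> S" using subgroup.subset[OF R(1)] by simp
    have RG: "subgroup R G" using incl_subgroup[OF S R(1)] .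
    have finR: "finite R" using finite_subset[OF RS finS] .
    obtain y where y: "y \<in> R" "y \<noteq> \<one>"
    proof (rule ccontr)
      assume "\<not> thesis"
      hence "R \<subseteq> {\<one>}" using that by blast
      hence "card R \<le> card {\<one>}" by (intro card_mono) simp_all
      hence "card R \<le> 1" by simp
      thus False using cR by simp
    qed
    have yc: "y \<in> carrier G" using y(1) RS Sc by blast
    have e1: "y [^] card R = \<one>" using subgroup_pow_order[OF RG finR y(1)] .
    have e2: "y [^] (p ^ c) = \<one>" using ex[OF subsetD[OF RS y(1)]] .
    have "coprime r p" using primes_coprime[OF rr pr] rp by metis
    hence "coprime (card R) (p ^ c)" using R(2) by simp
    hence "y = \<one>" using pow_coprime_one[OF yc e1 e2] by simp
    thus False using y(2) by simp
  qed
qed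

lemma prod_pow_normal:
  assumes K: "K \<lhd> G" and y: "y \<in> carrier G" and k: "k \<in> K"
  shows "\<exists>k'\<in>K. (k \<otimes> y) [^] (m::nat) = k' \<otimes> y [^] m"
proof (induction m)
  case 0
  interpret N: normal K G by (rule K)
  show ?case using N.one_closed by (intro bexI[of _ \<one>]) simp_all
next
  case (Suc m)
  interpret N: normal K G by (rule K)
  obtain k' where k': "k' \<in> K" "(k \<otimes> y) [^] m = k' \<otimes> y [^] m" using Suc by blast
  have kc: "k \<in> carrier G" "k' \<in> carrier G" using k k' N.subset by auto
  have ym: "y [^] m \<in> carrier G" using y by simp
  have nn: "\<forall>x\<in>carrier G. \<forall>h\<in>K. x \<otimes> h \<otimes> inv x \<in> K" using K by (simp add: normal_inv_iff)
  have c: "y [^] m \<otimes> k \<otimes> inv (y [^] m) \<in> K" using nn ym k by blast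
  have "(k \<otimes> y) [^] Suc m = (k' \<otimes> y [^] m) \<otimes> (k \<otimes> y)" using k' by simp
  also have "\<dots> = (k' \<otimes> (y [^] m \<otimes> k \<otimes> inv (y [^] m))) \<otimes> (y [^] m \<otimes> y)"
    using kc ym y by (simp add: m_assoc)
  finally have "(k \<otimes> y) [^] Suc m = (k' \<otimes> (y [^] m \<otimes> k \<otimes> inv (y [^] m))) \<otimes> y [^] Suc m"
    by simp
  moreover have "k' \<otimes> (y [^] m \<otimes> k \<otimes> inv (y [^] m)) \<in> K" using N.m_closed[OF k'(1) c] .
  ultimately show ?case by blast
qed

end



context group begin

lemma p_case:
  assumes fin: "finite (carrier G)" and Yn: "class_Yn G"
    and FN: "F \<lhd> G" and FC: "comm_group (G\<lparr>carrier := F\<rparr>)"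
    and Fall: "\<And>N. N \<lhd> G \<Longrightarrow> comm_group (G\<lparr>carrier := N\<rparr>) \<Longrightarrow> N \<subseteq> F"
    and c: "card (rcosets F) = p" and pr: "Factorial_Ring.prime p"
    and P: "sylow_subgroup G p P"
  shows "cyclic_group (G\<lparr>carrier := P\<rparr>)"
proof -
  have Fs: "subgroup F G" using normal_imp_subgroup[OF FN] .
  have Fc: "F \<subseteq> carrier G" using subgroup.subset[OF Fs] .
  define n where "n = order G"
  define a where "a = multiplicity p n"
  define n' where "n' = n div p ^ a"
  have Pd: "subgroup P G \<and> card P = p ^ multiplicity p (order G)"
    using P unfolding sylow_subgroup_def .
  have Ps: "subgroup P G" using Pd by (rule conjunct1)
  have cP: "card P = p ^ a" using Pd unfolding a_def n_def by (rule conjunct2)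
  have Pc: "P \<subseteq> carrier G" using subgroup.subset[OF Ps] .
  have finP: "finite P" using finite_subset[OF Pc fin] .
  have n0: "n \<noteq> 0" unfolding n_def using order_gt_0_iff_finite fin by simp
  have nu: "\<not> is_unit p" using pr by (metis not_prime_unit)
  have nn': "n = p ^ a * n'" unfolding n'_def a_def using multiplicity_dvd[of p n] by simp
  have ndvd: "\<not> p dvd n'" unfolding n'_def a_def using multiplicity_decompose[OF n0 nu] .
  have "coprime p n'" using prime_imp_coprime[OF pr ndvd] .
  hence copn: "coprime (p ^ a) n'" by simp
  have pa0: "p ^ a \<noteq> 0" using pr by (simp add: prime_gt_0_nat[OF pr])
  have l3: "p * card F = n" using lagrange[OF Fs] c unfolding n_def by simp
  have PnotF: "\<not> P \<subseteq> F"
  proof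
    assume PF: "P \<subseteq> F"
    interpret FG: group "G\<lparr>carrier := F\<rparr>" using subgroup_imp_group[OF Fs] .
    have "subgroup P (G\<lparr>carrier := F\<rparr>)" using subgroup_incl[OF Ps Fs PF] .
    hence "card (rcosets\<^bsub>G\<lparr>carrier := F\<rparr>\<^esub> P) * card P = card F"
      using FG.lagrange by (simp add: order_def)
    hence "p ^ a dvd card F" using cP by (metis dvd_triv_right)
    hence "p * p ^ a dvd p * card F" by simp
    hence "p ^ Suc a dvd n" using l3 by simp
    hence "Suc a \<le> multiplicity p n" using power_dvd_iff_le_multiplicity[OF n0 nu] by blast
    thus False unfolding a_def by simp
  qed
  then obtain x where xP: "x \<in> P" and xF: "x \<notin> F" by blast
  have xc: "x \<in> carrier G" using xP Pc by blast
  define Xg where "Xg = generate G {x}"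
  have XgP: "Xg \<subseteq> P" unfolding Xg_def using generate_subgroup_incl[of "{x}" P] xP Ps by simp
  show ?thesis
  proof (cases "Xg = P")
    case True
    have "generate (G\<lparr>carrier := P\<rparr>) (P \<inter> {x}) = P"
    proof -
      have "P \<inter> {x} = {x}" using xP by blast
      moreover have "generate (G\<lparr>carrier := P\<rparr>) {x} = generate G {x}"
        using generate_consistent[of "{x}" P] xP Ps by simp
      ultimately show ?thesis using True Xg_def by simp
    qed
    hence "subgroup_generated (G\<lparr>carrier := P\<rparr>) {x} = G\<lparr>carrier := P\<rparr>"
      unfolding subgroup_generated_def by simp
    thus ?thesis unfolding cyclic_group_def using xP by auto
  next
    case False
    define Mf where "Mf = {M. subgroup M G \<and> x \<in> M \<and> M \<subseteq> P \<and> M \<noteq> P}"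
    have XgM: "Xg \<in> Mf" unfolding Mf_def Xg_def
      using generate_is_subgroup[of "{x}"] xc generate.incl[of x "{x}" G] XgP False Xg_def by auto
    have finMf: "finite Mf"
    proof -
      have "Mf \<subseteq> Pow P" unfolding Mf_def by blast
      thus ?thesis using finP finite_subset by blast
    qed
    define mx where "mx = Max (card ` Mf)"
    have "mx \<in> card ` Mf" unfolding mx_def using finMf XgM by (intro Max_in) auto
    then obtain M where MM: "M \<in> Mf" "card M = mx" by blast
    have Mmax: "card M' \<le> card M" if "M' \<in> Mf" for M'
      using MM(2) mx_def finMf that by simp
    have Ms: "subgroup M G" and xM: "x \<in> M" and MP: "M \<subseteq> P" and MneP: "M \<noteq> P"
      using MM(1) unfolding Mf_def by auto
    have Mc: "M \<subseteq> carrier G" using subgroup.subset[OF Ms] .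
    have finM: "finite M" using finite_subset[OF MP finP] .
    interpret PG: group "G\<lparr>carrier := P\<rparr>" using subgroup_imp_group[OF Ps] .
    have MsP: "subgroup M (G\<lparr>carrier := P\<rparr>)" using subgroup_incl[OF Ms Ps MP] .
    have ordP: "order (G\<lparr>carrier := P\<rparr>) = p ^ a" using cP by (simp add: order_def)
    have finP': "finite (carrier (G\<lparr>carrier := P\<rparr>))" using finP by simp
    have MneP': "M \<noteq> carrier (G\<lparr>carrier := P\<rparr>)" using MneP by simp
    obtain g where g: "g \<in> carrier (G\<lparr>carrier := P\<rparr>) - M"
      "g <#\<^bsub>G\<lparr>carrier := P\<rparr>\<^esub> M #>\<^bsub>G\<lparr>carrier := P\<rparr>\<^esub> inv\<^bsub>G\<lparr>carrier := P\<rparr>\<^esub> g = M"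
      using PG.normalizer_grows[OF finP' ordP pr MsP MneP'] by blast
    have gP: "g \<in> P" and gM: "g \<notin> M" using g(1) by auto
    have gc: "g \<in> carrier G" using gP Pc by blast
    have ginv: "inv\<^bsub>G\<lparr>carrier := P\<rparr>\<^esub> g = inv g" using m_inv_consistent[OF Ps gP] .
    have gconj: "g <# M #> inv g = M" using g(2) unfolding ginv by simp
    define N1 where "N1 = normalizer G M \<inter> P"
    have N1s: "subgroup N1 G" unfolding N1_def
      using subgroups_Inter_pair[OF normalizer_imp_subgroup[OF Mc] Ps] .
    have MN1: "M \<subseteq> N1" unfolding N1_def using self_normalizer[OF Ms] MP by blast
    have gN1: "g \<in> N1" unfolding N1_def using normalizer_mem[OF Mc gc gconj] gP by blast
    have N1P: "N1 \<subseteq> P" unfolding N1_def by blast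
    have "N1 = P"
    proof (rule ccontr)
      assume "N1 \<noteq> P"
      hence "N1 \<in> Mf" unfolding Mf_def using N1s MN1 xM N1P by blast
      hence "card N1 \<le> card M" by (rule Mmax)
      moreover have "card M < card N1"
        using psubset_card_mono[OF finite_subset[OF N1P finP]] MN1 gN1 gM by blast
      ultimately show False by simp
    qed
    hence PN: "P \<subseteq> normalizer G M" unfolding N1_def by blast
    have MC: "comm_group (G\<lparr>carrier := M\<rparr>)"
    proof (rule ccontr)
      assume "\<not> comm_group (G\<lparr>carrier := M\<rparr>)"
      hence "normalizer G M = M" using Yn Ms unfolding class_Yn_def by blast
      hence "P \<subseteq> M" using PN by simp
      thus False using MP MneP by blast
    qed
    define Q where "Q = {f \<in> F. f [^] n' = \<one>}"
    define K where "K = {f \<in> F. f [^] (p ^ a) = \<one>}"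
    have QN: "Q \<lhd> G" unfolding Q_def using torsion_normal[OF FN FC] .
    have KN: "K \<lhd> G" unfolding K_def using torsion_normal[OF FN FC] .
    have Qs: "subgroup Q G" using normal_imp_subgroup[OF QN] .
    have Ks: "subgroup K G" using normal_imp_subgroup[OF KN] .
    have Qc: "Q \<subseteq> carrier G" using subgroup.subset[OF Qs] .
    have Kc: "K \<subseteq> carrier G" using subgroup.subset[OF Ks] .
    have KP: "K \<subseteq> P"
    proof -
      define S where "S = K <#> P"
      have Ss: "subgroup S G" unfolding S_def using mult_norm_subgroup[OF KN Ps] .
      have Sc: "S \<subseteq> carrier G" using subgroup.subset[OF Ss] .
      have ex: "s [^] (p ^ (a + a)) = \<one>" if s: "s \<in> S" for s
      proof -
        obtain k y where ky: "k \<in> K" "y \<in> P" "s = k \<otimes> y"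
          using s unfolding S_def set_mult_def by blast
        have yc: "y \<in> carrier G" using ky(2) Pc by blast
        have kc: "k \<in> carrier G" using ky(1) Kc by blast
        obtain k' where k': "k' \<in> K" "(k \<otimes> y) [^] (p ^ a) = k' \<otimes> y [^] (p ^ a)"
          using prod_pow_normal[OF KN yc ky(1)] by blast
        have "y [^] (p ^ a) = \<one>" using subgroup_pow_order[OF Ps finP ky(2)] cP by simp
        hence sa: "s [^] (p ^ a) = k'" using k' ky(3) Kc by auto
        have "s [^] (p ^ (a + a)) = (s [^] (p ^ a)) [^] (p ^ a)"
          using nat_pow_pow[of s "p ^ a" "p ^ a"] s Sc by (auto simp: power_add)
        also have "\<dots> = \<one>" using sa k'(1) unfolding K_def by simp
        finally show ?thesis .
      qed
      have cS: "card S = p ^ multiplicity p (card S)" using p_elems_card[OF fin Ss pr ex] .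
      have "card S dvd n" unfolding n_def using lagrange[OF Ss] by (metis dvd_triv_right)
      hence "p ^ multiplicity p (card S) dvd n" using cS by simp
      hence "multiplicity p (card S) \<le> a"
        unfolding a_def using power_dvd_iff_le_multiplicity[OF n0 nu] by blast
      hence "p ^ multiplicity p (card S) \<le> p ^ a"
        using power_increasing[of "multiplicity p (card S)" a p] prime_gt_1_nat[OF pr] by linarith
      hence "card S \<le> p ^ a" using cS by simp
      hence cSP: "card S \<le> card P" using cP by simp
      have PS: "P \<subseteq> S"
      proof
        fix y assume y: "y \<in> P"
        have "y = \<one> \<otimes> y" using y Pc by auto
        thus "y \<in> S" unfolding S_def set_mult_def using subgroup.one_closed[OF Ks] y by blast
      qed
      have finS: "finite S" using finite_subset[OF Sc fin] .
      have "P = S" using card_seteq[OF finS PS cSP] .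
      moreover have "K \<subseteq> S"
      proof
        fix k assume k: "k \<in> K"
        have "k = k \<otimes> \<one>" using k Kc by auto
        thus "k \<in> S" unfolding S_def set_mult_def using subgroup.one_closed[OF Ps] k by blast
      qed
      ultimately show ?thesis by simp
    qed
    have decomp: "\<exists>q\<in>Q. \<exists>k\<in>K. f = q \<otimes> k" if f: "f \<in> F" for f
    proof -
      have fc: "f \<in> carrier G" using f Fc by blast
      obtain s t where st: "p ^ a * s = n' * t + gcd (p ^ a) n'"
        using bezout_nat[OF pa0, of n'] by blast
      have g1: "gcd (p ^ a) n' = 1" using copn by (metis coprime_iff_gcd_eq_1)
      have st1: "p ^ a * s = n' * t + 1" using st unfolding g1 .
      have fn: "f [^] n = \<one>" unfolding n_def using pow_order_eq_1[OF fc] .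
      define k0 where "k0 = f [^] (n' * t)"
      define q where "q = f [^] (p ^ a * s)"
      have k0c: "k0 \<in> carrier G" unfolding k0_def using fc by simp
      have k0F: "k0 \<in> F" unfolding k0_def using subgroup_pow_closed[OF Fs f] .
      have qF: "q \<in> F" unfolding q_def using subgroup_pow_closed[OF Fs f] .
      have "q = f [^] (n' * t + 1)" unfolding q_def using st1 by simp
      also have "\<dots> = k0 \<otimes> f" unfolding k0_def using nat_pow_Suc[of f "n' * t"] by simp
      finally have qk: "q = k0 \<otimes> f" .
      have "q [^] n' = f [^] (p ^ a * s * n')" unfolding q_def using nat_pow_pow[OF fc] by simp
      also have "\<dots> = (f [^] n) [^] s" using nat_pow_pow[OF fc] nn' by (simp add: ac_simps)
      also have "\<dots> = \<one>" using fn by simp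
      finally have qQ: "q \<in> Q" unfolding Q_def using qF by simp
      have "k0 [^] (p ^ a) = f [^] (n' * t * p ^ a)" unfolding k0_def using nat_pow_pow[OF fc] by simp
      also have "\<dots> = (f [^] n) [^] t" using nat_pow_pow[OF fc] nn' by (simp add: ac_simps)
      also have "\<dots> = \<one>" using fn by simp
      finally have k0K: "k0 \<in> K" unfolding K_def using k0F by simp
      have ik: "inv k0 \<in> K" using subgroup.m_inv_closed[OF Ks k0K] .
      have cm: "k0 \<otimes> f = f \<otimes> k0"
        using comm_monoid.m_comm[OF comm_group.axioms(1)[OF FC], of k0 f] k0F f by simp
      have "q \<otimes> inv k0 = f"
      proof -
        have "q \<otimes> inv k0 = f \<otimes> k0 \<otimes> inv k0" using qk cm by simp
        also have "\<dots> = f" using fc k0c by (simp add: m_assoc)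
        finally show ?thesis .
      qed
      thus ?thesis using qQ ik by metis
    qed
    have PQ: "y = \<one>" if "y \<in> P" "y \<in> Q" for y
    proof -
      have yc: "y \<in> carrier G" using that Pc by blast
      have "y [^] (p ^ a) = \<one>" using subgroup_pow_order[OF Ps finP that(1)] cP by simp
      moreover have "y [^] n' = \<one>" using that(2) unfolding Q_def by simp
      ultimately show ?thesis using pow_coprime_one[OF yc _ _ copn] by simp
    qed
    define H where "H = Q <#> M"
    have Hs: "subgroup H G" unfolding H_def using mult_norm_subgroup[OF QN Ms] .
    have Hc: "H \<subseteq> carrier G" using subgroup.subset[OF Hs] .
    have MH: "M \<subseteq> H"
    proof
      fix m assume m: "m \<in> M"
      have "m = \<one> \<otimes> m" using m Mc by auto
      thus "m \<in> H" unfolding H_def set_mult_def using subgroup.one_closed[OF Qs] m by blast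
    qed
    have QH: "Q \<subseteq> H"
    proof
      fix q assume q: "q \<in> Q"
      have "q = q \<otimes> \<one>" using q Qc by auto
      thus "q \<in> H" unfolding H_def set_mult_def using subgroup.one_closed[OF Ms] q by blast
    qed
    have PNH: "P \<subseteq> normalizer G H"
    proof (rule normalizerI[OF Hc Ps])
      fix g h assume g: "g \<in> P" and h: "h \<in> H"
      obtain q m where qm: "q \<in> Q" "m \<in> M" "h = q \<otimes> m"
        using h unfolding H_def set_mult_def by blast
      have gc: "g \<in> carrier G" using g Pc by blast
      have qc: "q \<in> carrier G" using qm(1) Qc by blast
      have mc: "m \<in> carrier G" using qm(2) Mc by blast
      have nq: "\<forall>x\<in>carrier G. \<forall>h\<in>Q. x \<otimes> h \<otimes> inv x \<in> Q" using QN by (simp add: normal_inv_iff)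
      have q': "g \<otimes> q \<otimes> inv g \<in> Q" using nq gc qm(1) by blast
      have m': "g \<otimes> m \<otimes> inv g \<in> M" using normalizer_elem[OF Mc _ qm(2)] PN g by blast
      have "g \<otimes> h \<otimes> inv g = (g \<otimes> q \<otimes> inv g) \<otimes> (g \<otimes> m \<otimes> inv g)"
        using qm(3) gc qc mc by (simp add: m_assoc)
      thus "g \<otimes> h \<otimes> inv g \<in> H" unfolding H_def set_mult_def using q' m' by blast
    qed
    show ?thesis
    proof (cases "comm_group (G\<lparr>carrier := H\<rparr>)")
      case False
      hence "normalizer G H = H" using Yn Hs unfolding class_Yn_def by blast
      hence PH: "P \<subseteq> H" using PNH by simp
      have "P \<subseteq> M"
      proof
        fix y assume y: "y \<in> P"
        obtain q m where qm: "q \<in> Q" "m \<in> M" "y = q \<otimes> m"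
          using PH y unfolding H_def set_mult_def by blast
        have yc: "y \<in> carrier G" using y Pc by blast
        have qc: "q \<in> carrier G" using qm(1) Qc by blast
        have mc: "m \<in> carrier G" using qm(2) Mc by blast
        have "q = y \<otimes> inv m" using qm(3) qc mc by (simp add: m_assoc)
        moreover have "y \<otimes> inv m \<in> P"
          using subgroup.m_closed[OF Ps y subgroup.m_inv_closed[OF Ps]] qm(2) MP by blast
        ultimately have "q \<in> P" by simp
        hence "q = \<one>" using PQ qm(1) by blast
        thus "y \<in> M" using qm(2,3) mc by simp
      qed
      thus ?thesis using MP MneP by blast
    next
      case True
      define Nn where "Nn = normalizer G H"
      have Nns: "subgroup Nn G" unfolding Nn_def using normalizer_imp_subgroup[OF Hc] .
      have HNn: "H \<subseteq> Nn" unfolding Nn_def using self_normalizer[OF Hs] by blast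
      have PNn: "P \<subseteq> Nn" unfolding Nn_def using PNH .
      have FNn: "F \<subseteq> Nn"
      proof
        fix f assume f: "f \<in> F"
        obtain q k where qk: "q \<in> Q" "k \<in> K" "f = q \<otimes> k" using decomp[OF f] by blast
        have "q \<in> Nn" using qk(1) QH HNn by blast
        moreover have "k \<in> Nn" using qk(2) KP PNn by blast
        ultimately show "f \<in> Nn" using subgroup.m_closed[OF Nns] qk(3) by simp
      qed
      have xNn: "x \<in> Nn" using xP PNn by blast
      have "Nn = carrier G" using index_prime_full[OF fin Nns Fs FNn xNn xF c pr] .
      hence "H \<lhd> G" using Hs normalizer_elem[OF Hc] unfolding Nn_def by (simp add: normal_inv_iff)
      hence "H \<subseteq> F" using Fall True by blast
      thus ?thesis using xF xP MH xM by blast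
    qed
  qed
qed

end



theorem lemma2p7:
  fixes G (structure) and p :: nat
  assumes "group G"
    and "finite (carrier G)"
    and "class_Yn G"
    and "solvable G"
    and "\<not> nilpotent_grp G"
    and "p = card (rcosets (fitting_subgroup G))"
    and "Factorial_Ring.prime p"
  shows "(\<forall>P. sylow_subgroup G p P \<longrightarrow> cyclic_group (G\<lparr>carrier := P\<rparr>))
       \<and> (\<forall>r P. Factorial_Ring.prime (r::nat) \<and> r \<noteq> p \<and> sylow_subgroup G r P
                  \<longrightarrow> comm_group (G\<lparr>carrier := P\<rparr>))"
proof -
  interpret group G by (rule assms(1))
  have fin: "finite (carrier G)" by (rule assms(2))
  have Yn: "class_Yn G" by (rule assms(3))
  have pr: "Factorial_Ring.prime p" by (rule assms(7))
  define F where "F = fitting_subgroup G"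
  have FN: "F \<lhd> G" unfolding F_def by (rule fit_normal)
  have Fs: "subgroup F G" using normal_imp_subgroup[OF FN] .
  have Fc: "F \<subseteq> carrier G" using subgroup.subset[OF Fs] .
  have cF: "card (rcosets F) = p" using assms(6) F_def by simp
  have p1: "p > 1" using prime_gt_1_nat[OF pr] .
  have Fne: "F \<noteq> carrier G"
  proof
    assume FG: "F = carrier G"
    have "card (rcosets F) * card F = order G" using lagrange[OF Fs] .
    moreover have "order G > 0" using fin by (simp add: order_gt_0_iff_finite)
    ultimately have "card (rcosets F) = 1" using FG by (simp add: order_def)
    thus False using cF p1 by simp
  qed
  have Fall: "N \<subseteq> F" if "N \<lhd> G" "comm_group (G\<lparr>carrier := N\<rparr>)" for N
    unfolding F_def using abelian_normal_in_fit[OF that] .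
  have FC: "comm_group (G\<lparr>carrier := F\<rparr>)"
  proof (rule ccontr)
    assume "\<not> comm_group (G\<lparr>carrier := F\<rparr>)"
    hence nF: "normalizer G F = F" using Yn Fs unfolding class_Yn_def by blast
    have nn: "\<forall>x\<in>carrier G. \<forall>h\<in>F. x \<otimes> h \<otimes> inv x \<in> F" using FN by (simp add: normal_inv_iff)
    have "carrier G \<subseteq> normalizer G F"
      using normalizerI[OF Fc subgroup_self] nn by blast
    hence "carrier G \<subseteq> F" using nF by simp
    thus False using Fne Fc by blast
  qed
  have pw: "g [^] p \<in> F" if "g \<in> carrier G" for g
    using pow_index_in[OF fin FN cF that] p1 by simp
  show ?thesis
  proof (intro conjI allI impI)
    fix P assume "sylow_subgroup G p P"
    thus "cyclic_group (G\<lparr>carrier := P\<rparr>)" using p_case[OF fin Yn FN FC Fall cF pr] by blast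
  next
    fix r P assume h: "Factorial_Ring.prime (r::nat) \<and> r \<noteq> p \<and> sylow_subgroup G r P"
    show "comm_group (G\<lparr>carrier := P\<rparr>)"
      using r_case[OF fin Fc FC Fs pw pr] h by blast
  qed
qed



end
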